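(* Let $N\geq3$, $J>0$, $\gamma>0$, and let $$H_W=J\sum_{i=1}^N\left[-2\sigma_i^z+\sigma_i^z\sigma_{i+1}^z-\gamma\,\boldsymbol{\sigma}_i\cdot\boldsymbol{\sigma}_{i+1}\right]$$ on $(\mathbb{C}^2)^{\otimes N}$ with periodic boundary conditions. Then $|W_N\rangle=\frac{1}{\sqrt N}\left(|10\cdots0\rangle+|010\cdots0\rangle+\cdots+|0\cdots01\rangle\right)$ is a ground state of $H_W$ (an eigenvector for its smallest eigenvalue), and the ground space is degenerate (it also contains $|0\rangle^{\otimes N}$).
   Context: $\sigma^x,\sigma^y,\sigma^z$ are the Pauli matrices with $\sigma^z|0\rangle=|0\rangle$, $\sigma^z|1\rangle=-|1\rangle$; $\sigma_i^a$ acts on qubit $i$; $\boldsymbol{\sigma}_i\cdot\boldsymbol{\sigma}_{j}=\sigma_i^x\sigma_j^x+\sigma_i^y\sigma_j^y+\sigma_i^z\sigma_j^z$. Periodic boundary conditions: site indices are taken mod $N$, so $\sigma_{N+1}=\sigma_1$. *)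

theory Defs
  imports Complex_Main "Jordan_Normal_Form.Char_Poly"
begin

text \<open>Computational basis of (C^2)^(tensor N): index k < 2^N; qubit j (0 \<le> j < N) is in
  state |1> iff bit j of k is set. Sites are 0..N-1 with periodic wrap-around (j+1) mod N.\<close>

definition qbit :: "nat \<Rightarrow> nat \<Rightarrow> bool" where
  "qbit k j = odd (k div 2 ^ j)"

datatype pauli_axis = PX | PY | PZ

text \<open>Single-qubit Pauli matrix entry <b|sigma^a|c>, with False = |0>, True = |1>;
  sigma^z|0> = |0>, sigma^z|1> = -|1>.\<close>
fun pauli_entry :: "pauli_axis \<Rightarrow> bool \<Rightarrow> bool \<Rightarrow> complex" where
  "pauli_entry PX b c = (if b \<noteq> c then 1 else 0)"
| "pauli_entry PY b c = (if b \<and> \<not> c then \<i> else if \<not> b \<and> c then - \<i> else 0)"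
| "pauli_entry PZ b c = (if b = c then (if b then -1 else 1) else 0)"

definition sigma :: "nat \<Rightarrow> pauli_axis \<Rightarrow> nat \<Rightarrow> complex mat" where
  "sigma N a i = mat (2 ^ N) (2 ^ N)
     (\<lambda>(r, c). if (\<forall>j<N. j \<noteq> i \<longrightarrow> qbit r j = qbit c j)
               then pauli_entry a (qbit r i) (qbit c i) else 0)"

primrec mat_sum :: "nat \<Rightarrow> (nat \<Rightarrow> complex mat) \<Rightarrow> nat \<Rightarrow> complex mat" where
  "mat_sum n f 0 = 0\<^sub>m n n"
| "mat_sum n f (Suc m) = mat_sum n f m + f m"

definition H_W :: "nat \<Rightarrow> real \<Rightarrow> real \<Rightarrow> complex mat" where
  "H_W N J \<gamma> = complex_of_real J \<cdot>\<^sub>m mat_sum (2 ^ N)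
     (\<lambda>i. let i' = (i + 1) mod N in
        (- 2) \<cdot>\<^sub>m sigma N PZ i
        + sigma N PZ i * sigma N PZ i'
        - complex_of_real \<gamma> \<cdot>\<^sub>m
            (sigma N PX i * sigma N PX i' + sigma N PY i * sigma N PY i'
             + sigma N PZ i * sigma N PZ i')) N"

definition W_state :: "nat \<Rightarrow> complex vec" where
  "W_state N = vec (2 ^ N)
     (\<lambda>k. if card {j. j < N \<and> qbit k j} = 1 then complex_of_real (1 / sqrt (real N)) else 0)"

definition zero_state :: "nat \<Rightarrow> complex vec" where
  "zero_state N = vec (2 ^ N) (\<lambda>k. if k = 0 then 1 else 0)"

end

theory Submission
  imports Defs
begin

lemma qbit_bit: "qbit k j = bit k j"
  by (simp add: qbit_def bit_nat_def)

lemma bit_less_pow: "(c::nat) < 2 ^ N \<Longrightarrow> bit c j \<Longrightarrow> j < N"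
  by (metis bit_take_bit_iff take_bit_nat_eq_self_iff)

lemma eq_by_bits: "(a::nat) < 2^N \<Longrightarrow> b < 2^N \<Longrightarrow> (\<forall>j<N. bit a j = bit b j) \<Longrightarrow> a = b"
  by (metis bit_eq_iff bit_less_pow)

lemma flip_less: "(r::nat) < 2^N \<Longrightarrow> i < N \<Longrightarrow> flip_bit i r < 2^N"
proof -
  assume a: "r < 2^N" "i < N"
  have "take_bit N (flip_bit i r) = flip_bit i r"
    by (rule bit_eqI) (use a bit_less_pow in \<open>auto simp: bit_take_bit_iff bit_flip_bit_iff\<close>)
  thus ?thesis by (simp add: take_bit_nat_eq_self_iff)
qed

lemma cond_iff:
  assumes "r < 2^N" "c < 2^N" "i < N"
  shows "(\<forall>j<N. j \<noteq> i \<longrightarrow> qbit r j = qbit c j) \<longleftrightarrow> (c = r \<or> c = flip_bit i r)"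
proof
  assume h: "\<forall>j<N. j \<noteq> i \<longrightarrow> qbit r j = qbit c j"
  show "c = r \<or> c = flip_bit i r"
  proof (cases "bit c i = bit r i")
    case True
    then have "c = r" using h assms by (intro eq_by_bits[of c N r]) (auto simp: qbit_bit)
    then show ?thesis ..
  next
    case False
    then have "c = flip_bit i r" using h assms flip_less
      by (intro eq_by_bits[of c N]) (auto simp: qbit_bit bit_flip_bit_iff)
    then show ?thesis ..
  qed
next
  assume "c = r \<or> c = flip_bit i r"
  then show "\<forall>j<N. j \<noteq> i \<longrightarrow> qbit r j = qbit c j"
    by (auto simp: qbit_bit bit_flip_bit_iff)
qed

lemma sigma_carrier[simp]: "sigma N a i \<in> carrier_mat (2^N) (2^N)"
  by (simp add: sigma_def)

lemma sigma_vec: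
  assumes v: "v \<in> carrier_vec (2^N)" and r: "r < 2^N" and i: "i < N"
  shows "(sigma N a i *\<^sub>v v) $ r = pauli_entry a (bit r i) (bit r i) * v $ r
          + pauli_entry a (bit r i) (\<not> bit r i) * v $ flip_bit i r"
proof -
  let ?f = "\<lambda>c. (if (\<forall>j<N. j \<noteq> i \<longrightarrow> qbit r j = qbit c j)
               then pauli_entry a (qbit r i) (qbit c i) else 0) * v $ c"
  have fl: "flip_bit i r < 2^N" using flip_less r i .
  have "bit (flip_bit i r) i \<noteq> bit r i" by (simp add: bit_flip_bit_iff)
  then have ne: "flip_bit i r \<noteq> r" by metis
  have "(sigma N a i *\<^sub>v v) $ r = (\<Sum>c\<in>{0..<2^N}. ?f c)"
    using v r by (simp add: sigma_def scalar_prod_def row_def)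
  also have "\<dots> = (\<Sum>c\<in>{r, flip_bit i r}. ?f c)"
    apply (rule sum.mono_neutral_right)
    using r fl cond_iff[OF r _ i] by auto
  also have "\<dots> = ?f r + ?f (flip_bit i r)" using ne by simp
  also have "\<dots> = pauli_entry a (bit r i) (bit r i) * v $ r
          + pauli_entry a (bit r i) (\<not> bit r i) * v $ flip_bit i r"
    by (simp add: qbit_bit bit_flip_bit_iff)
  finally show ?thesis .
qed

lemma idx_add: "(A::complex mat) \<in> carrier_mat n n \<Longrightarrow> B \<in> carrier_mat n n \<Longrightarrow> v \<in> carrier_vec n \<Longrightarrow> r < n \<Longrightarrow>
  ((A + B) *\<^sub>v v) $ r = (A *\<^sub>v v) $ r + (B *\<^sub>v v) $ r"
  by (simp add: add_mult_distrib_mat_vec)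

lemma idx_minus: "(A::complex mat) \<in> carrier_mat n n \<Longrightarrow> B \<in> carrier_mat n n \<Longrightarrow> v \<in> carrier_vec n \<Longrightarrow> r < n \<Longrightarrow>
  ((A - B) *\<^sub>v v) $ r = (A *\<^sub>v v) $ r - (B *\<^sub>v v) $ r"
  by (subst minus_mult_distrib_mat_vec[of A n n B v]) auto

lemma idx_smult: "(A::complex mat) \<in> carrier_mat n n \<Longrightarrow> v \<in> carrier_vec n \<Longrightarrow> r < n \<Longrightarrow>
  ((c \<cdot>\<^sub>m A) *\<^sub>v v) $ r = c * (A *\<^sub>v v) $ r"
  by (simp add: scalar_prod_def sum_distrib_left mult.assoc)

lemma idx_mult: "(A::complex mat) \<in> carrier_mat n n \<Longrightarrow> B \<in> carrier_mat n n \<Longrightarrow> v \<in> carrier_vec n \<Longrightarrow>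
  ((A * B) *\<^sub>v v) = A *\<^sub>v (B *\<^sub>v v)"
  by simp

definition zr :: "bool \<Rightarrow> real" where "zr b = (if b then -1 else 1)"
definition py :: "bool \<Rightarrow> complex" where "py b = (if b then \<i> else - \<i>)"

lemma sZ: "v \<in> carrier_vec (2^N) \<Longrightarrow> r < 2^N \<Longrightarrow> i < N \<Longrightarrow>
  (sigma N PZ i *\<^sub>v v) $ r = of_real (zr (bit r i)) * v $ r"
  by (simp add: sigma_vec zr_def)

lemma sX: "v \<in> carrier_vec (2^N) \<Longrightarrow> r < 2^N \<Longrightarrow> i < N \<Longrightarrow>
  (sigma N PX i *\<^sub>v v) $ r = v $ flip_bit i r"
  by (simp add: sigma_vec)

lemma sY: "v \<in> carrier_vec (2^N) \<Longrightarrow> r < 2^N \<Longrightarrow> i < N \<Longrightarrow>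
  (sigma N PY i *\<^sub>v v) $ r = py (bit r i) * v $ flip_bit i r"
  by (simp add: sigma_vec py_def)

lemma sv_carrier: "v \<in> carrier_vec (2^N) \<Longrightarrow> sigma N a i *\<^sub>v v \<in> carrier_vec (2^N)"
  by (rule mult_mat_vec_carrier[OF sigma_carrier])

lemma sprod: "v \<in> carrier_vec (2^N) \<Longrightarrow>
  (sigma N a i * sigma N b j) *\<^sub>v v = sigma N a i *\<^sub>v (sigma N b j *\<^sub>v v)"
  by (rule assoc_mult_mat_vec[OF sigma_carrier sigma_carrier])

lemma sZZ: "v \<in> carrier_vec (2^N) \<Longrightarrow> r < 2^N \<Longrightarrow> i < N \<Longrightarrow> j < N \<Longrightarrow>
  ((sigma N PZ i * sigma N PZ j) *\<^sub>v v) $ r = of_real (zr (bit r i) * zr (bit r j)) * v $ r"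
  by (simp add: sprod sZ sv_carrier)

lemma sXXYY: assumes "v \<in> carrier_vec (2^N)" "r < 2^N" "i < N" "j < N" "i \<noteq> j"
  shows "((sigma N PX i * sigma N PX j) *\<^sub>v v) $ r + ((sigma N PY i * sigma N PY j) *\<^sub>v v) $ r
     = (if bit r i = bit r j then 0 else 2) * v $ flip_bit j (flip_bit i r)"
proof -
  have f: "flip_bit i r < 2^N" using flip_less assms by blast
  have b: "bit (flip_bit i r) j = bit r j" using assms by (simp add: bit_flip_bit_iff)
  show ?thesis using assms f b
    by (simp add: sprod sX sY py_def sv_carrier)
qed

lemma mat_sum_vec: assumes "\<forall>i<m. f i \<in> carrier_mat n n" "v \<in> carrier_vec n"
  shows "mat_sum n f m \<in> carrier_mat n n \<and> (\<forall>r<n. (mat_sum n f m *\<^sub>v v) $ r = (\<Sum>i<m. (f i *\<^sub>v v) $ r))"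
  using assms(1)
proof (induction m)
  case 0
  then show ?case using assms(2) by (simp add: scalar_prod_def)
next
  case (Suc m)
  then have IH: "mat_sum n f m \<in> carrier_mat n n" "\<forall>r<n. (mat_sum n f m *\<^sub>v v) $ r = (\<Sum>i<m. (f i *\<^sub>v v) $ r)"
    and fm: "f m \<in> carrier_mat n n" by auto
  have "mat_sum n f (Suc m) \<in> carrier_mat n n" using IH fm by simp
  moreover have "(mat_sum n f (Suc m) *\<^sub>v v) $ r = (\<Sum>i<Suc m. (f i *\<^sub>v v) $ r)" if "r < n" for r
  proof -
    have "(mat_sum n f (Suc m) *\<^sub>v v) $ r = (mat_sum n f m *\<^sub>v v) $ r + (f m *\<^sub>v v) $ r"
      using idx_add[OF IH(1) fm assms(2) that] by simp
    then show ?thesis using IH(2) that by simp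
  qed
  ultimately show ?case by blast
qed

lemma sig2_carrier: "sigma N a i * sigma N b j \<in> carrier_mat (2^N) (2^N)"
  by (rule mult_carrier_mat[OF sigma_carrier sigma_carrier])

definition Fm :: "nat \<Rightarrow> real \<Rightarrow> nat \<Rightarrow> complex mat" where
  "Fm N \<gamma> i = (let i' = (i + 1) mod N in
        (- 2) \<cdot>\<^sub>m sigma N PZ i
        + sigma N PZ i * sigma N PZ i'
        - complex_of_real \<gamma> \<cdot>\<^sub>m
            (sigma N PX i * sigma N PX i' + sigma N PY i * sigma N PY i'
             + sigma N PZ i * sigma N PZ i'))"

lemma H_Fm: "H_W N J \<gamma> = complex_of_real J \<cdot>\<^sub>m mat_sum (2 ^ N) (Fm N \<gamma>) N"
  unfolding H_W_def Fm_def[abs_def] by simp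

lemma Fm_carrier: "Fm N \<gamma> i \<in> carrier_mat (2^N) (2^N)"
  unfolding Fm_def Let_def
  by (intro minus_carrier_mat add_carrier_mat smult_carrier_mat sig2_carrier sigma_carrier)

definition Dr :: "nat \<Rightarrow> real \<Rightarrow> nat \<Rightarrow> nat \<Rightarrow> real" where
  "Dr N \<gamma> r i = -2 * zr (bit r i) + (1 - \<gamma>) * zr (bit r i) * zr (bit r ((i+1) mod N))"
definition Cr :: "nat \<Rightarrow> nat \<Rightarrow> nat \<Rightarrow> real" where
  "Cr N r i = (if bit r i = bit r ((i+1) mod N) then 0 else 2)"
definition sw :: "nat \<Rightarrow> nat \<Rightarrow> nat \<Rightarrow> nat" where
  "sw N r i = flip_bit ((i+1) mod N) (flip_bit i r)"

lemma Fm_vec: assumes "N \<ge> 2" "i < N" "v \<in> carrier_vec (2^N)" "r < 2^N"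
  shows "(Fm N \<gamma> i *\<^sub>v v) $ r = of_real (Dr N \<gamma> r i) * v $ r - of_real \<gamma> * of_real (Cr N r i) * v $ sw N r i"
proof -
  let ?j = "(i + 1) mod N"
  have j: "?j < N" using assms by simp
  have ij: "i \<noteq> ?j" using assms
  proof (cases "i + 1 < N")
    case False
    then have "i + 1 = N" using assms by simp
    then have "(i+1) mod N = 0" by simp
    then show ?thesis using \<open>i + 1 = N\<close> assms by simp
  qed simp
  have c: "\<And>a b k l. sigma N a k * sigma N b l \<in> carrier_mat (2^N) (2^N)"
    by (rule sig2_carrier)
  have e: "(Fm N \<gamma> i *\<^sub>v v) $ r = (-2) * (sigma N PZ i *\<^sub>v v) $ r + ((sigma N PZ i * sigma N PZ ?j) *\<^sub>v v) $ r
     - of_real \<gamma> * ((((sigma N PX i * sigma N PX ?j) *\<^sub>v v) $ r + ((sigma N PY i * sigma N PY ?j) *\<^sub>v v) $ r)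
        + ((sigma N PZ i * sigma N PZ ?j) *\<^sub>v v) $ r)"
    unfolding Fm_def Let_def using assms c
    by (simp add: idx_add[where n="2^N"] idx_minus[where n="2^N"] idx_smult[where n="2^N"] del: index_mult_mat_vec)
  show ?thesis unfolding e using assms j ij
    by (simp add: sZ sZZ sXXYY Dr_def Cr_def sw_def algebra_simps)
qed

lemma H_vec: assumes "N \<ge> 2" "v \<in> carrier_vec (2^N)" "r < 2^N"
  shows "(H_W N J \<gamma> *\<^sub>v v) $ r = of_real J * (\<Sum>i<N. of_real (Dr N \<gamma> r i) * v $ r - of_real \<gamma> * of_real (Cr N r i) * v $ sw N r i)"
proof -
  have ms: "mat_sum (2^N) (Fm N \<gamma>) N \<in> carrier_mat (2^N) (2^N) \<and> (\<forall>r<2^N. (mat_sum (2^N) (Fm N \<gamma>) N *\<^sub>v v) $ r = (\<Sum>i<N. (Fm N \<gamma> i *\<^sub>v v) $ r))"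
    by (rule mat_sum_vec) (use assms Fm_carrier in auto)
  have "(H_W N J \<gamma> *\<^sub>v v) $ r = of_real J * (mat_sum (2^N) (Fm N \<gamma>) N *\<^sub>v v) $ r"
    unfolding H_Fm using ms assms by (intro idx_smult) auto
  also have "\<dots> = of_real J * (\<Sum>i<N. (Fm N \<gamma> i *\<^sub>v v) $ r)" using ms assms by simp
  also have "\<dots> = of_real J * (\<Sum>i<N. of_real (Dr N \<gamma> r i) * v $ r - of_real \<gamma> * of_real (Cr N r i) * v $ sw N r i)"
    using assms Fm_vec by simp
  finally show ?thesis .
qed

lemma H_carrier: "H_W N J \<gamma> \<in> carrier_mat (2^N) (2^N)"
  unfolding H_Fm using mat_sum_vec[of N "Fm N \<gamma>" "2^N" "0\<^sub>v (2^N)"] Fm_carrier by auto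

lemma suc_mod: assumes "i < (N::nat)" shows "(i + 1) mod N = (if i + 1 = N then 0 else i + 1)"
proof (cases "i + 1 = N")
  case False
  with assms have "i + 1 < N" by simp
  then show ?thesis by simp
qed simp

lemma bij_suc: "bij_betw (\<lambda>i. (i + 1) mod N) {..<N} {..<(N::nat)}"
proof -
  have "inj_on (\<lambda>i. (i + 1) mod N) {..<N}"
    unfolding inj_on_def
  proof (intro ballI impI)
    fix x y :: nat assume x: "x \<in> {..<N}" and y: "y \<in> {..<N}" and e: "(x + 1) mod N = (y + 1) mod N"
    show "x = y" using e suc_mod[of x N] suc_mod[of y N] x y by (auto split: if_splits)
  qed
  moreover have "(\<lambda>i. (i + 1) mod N) ` {..<N} \<subseteq> {..<N}" by auto
  ultimately show ?thesis
    by (simp add: bij_betw_def endo_inj_surj)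
qed

lemma sum_shift: "(\<Sum>i<(N::nat). g ((i + 1) mod N)) = (\<Sum>i<N. (g i :: real))"
  using sum.reindex_bij_betw[OF bij_suc, of g] by simp

definition gb :: "real \<Rightarrow> bool \<Rightarrow> bool \<Rightarrow> real" where
  "gb \<gamma> a b = - zr a - zr b + (1 - \<gamma>) * zr a * zr b - \<gamma> * (if a = b then 0 else 2)"

lemma sumD: "(\<Sum>i<N. Dr N \<gamma> r i - \<gamma> * Cr N r i) = (\<Sum>i<N. gb \<gamma> (bit r i) (bit r ((i+1) mod N)))"
proof -
  have "(\<Sum>i<N. Dr N \<gamma> r i - \<gamma> * Cr N r i) = (\<Sum>i<N. (- zr (bit r i) - zr (bit r ((i+1) mod N)) + (1 - \<gamma>) * zr (bit r i) * zr (bit r ((i+1) mod N)) - \<gamma> * Cr N r i))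
      + ((\<Sum>i<N. zr (bit r ((i+1) mod N))) - (\<Sum>i<N. zr (bit r i)))"
    by (simp add: Dr_def sum.distrib sum_subtractf algebra_simps sum_distrib_left)
  also have "(\<Sum>i<N. zr (bit r ((i+1) mod N))) = (\<Sum>i<N. zr (bit r i))"
    by (rule sum_shift)
  finally show ?thesis by (simp add: gb_def Cr_def)
qed

lemma gb_ge: "\<gamma> > 0 \<Longrightarrow> gb \<gamma> a b \<ge> -1 - \<gamma>"
  by (cases a; cases b) (auto simp: gb_def zr_def)

lemma gb_eq: "\<not> (a \<and> b) \<Longrightarrow> gb \<gamma> a b = -1 - \<gamma>"
  by (cases a; cases b) (auto simp: gb_def zr_def)

lemma ij_ne: "(N::nat) \<ge> 2 \<Longrightarrow> i < N \<Longrightarrow> (i + 1) mod N \<noteq> i"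
  using suc_mod[of i N] by (auto split: if_splits)

lemma sw_less: "N \<ge> 2 \<Longrightarrow> i < N \<Longrightarrow> r < 2^N \<Longrightarrow> sw N r i < 2^N"
  unfolding sw_def by (intro flip_less) auto

lemma bit_sw: "N \<ge> 2 \<Longrightarrow> i < N \<Longrightarrow> bit (sw N r i) t = (if t = i \<or> t = (i+1) mod N then \<not> bit r t else bit r t)"
  unfolding sw_def using ij_ne[of N i] by (auto simp: bit_flip_bit_iff)

definition wt :: "nat \<Rightarrow> nat \<Rightarrow> nat" where "wt N k = card {j. j < N \<and> bit k j}"

lemma wt_sw: assumes "N \<ge> 2" "i < N" "Cr N r i \<noteq> 0"
  shows "wt N (sw N r i) = wt N r"
proof -
  let ?j = "(i+1) mod N"
  let ?S = "{j. j < N \<and> bit r j}"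
  have j: "?j < N" "?j \<noteq> i" using assms ij_ne by auto
  have d: "bit r i \<noteq> bit r ?j" using assms(3) by (auto simp: Cr_def split: if_splits)
  have fin: "finite ?S" by simp
  show ?thesis
  proof (cases "bit r i")
    case True
    then have "{t. t < N \<and> bit (sw N r i) t} = insert ?j (?S - {i})"
      using assms j d by (auto simp: bit_sw[OF assms(1,2)])
    moreover have "card (insert ?j (?S - {i})) = card ?S"
    proof -
      have iS: "i \<in> ?S" using True assms by simp
      have "?j \<notin> ?S - {i}" using d True by simp
      hence "card (insert ?j (?S - {i})) = Suc (card (?S - {i}))" using fin by simp
      also have "\<dots> = card ?S" using card_Suc_Diff1[OF fin iS] .
      finally show ?thesis .
    qed
    ultimately show ?thesis by (simp add: wt_def)
  next
    case False
    then have "{t. t < N \<and> bit (sw N r i) t} = insert i (?S - {?j})"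
      using assms j d by (auto simp: bit_sw[OF assms(1,2)])
    moreover have "card (insert i (?S - {?j})) = card ?S"
    proof -
      have iS: "?j \<in> ?S" using False d j by simp
      have "i \<notin> ?S - {?j}" using False by simp
      hence "card (insert i (?S - {?j})) = Suc (card (?S - {?j}))" using fin by simp
      also have "\<dots> = card ?S" using card_Suc_Diff1[OF fin iS] .
      finally show ?thesis .
    qed
    ultimately show ?thesis by (simp add: wt_def)
  qed
qed

lemma sw_nz: assumes "N \<ge> 2" "i < N" "Cr N r i \<noteq> 0" shows "sw N r i \<noteq> 0"
proof
  assume z: "sw N r i = 0"
  have "bit r i \<noteq> bit r ((i+1) mod N)" using assms(3) by (auto simp: Cr_def split: if_splits)
  moreover have "\<not> bit (sw N r i) i" "\<not> bit (sw N r i) ((i+1) mod N)" using z by auto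
  ultimately show False using bit_sw[OF assms(1,2)] by (auto split: if_splits)
qed

lemma sum_lower: assumes "\<gamma> > 0" "N \<ge> 2"
  shows "(\<Sum>i<N. Dr N \<gamma> r i - \<gamma> * Cr N r i) \<ge> - (real N * (1 + \<gamma>))"
proof -
  have "(\<Sum>i<N. Dr N \<gamma> r i - \<gamma> * Cr N r i) = (\<Sum>i<N. gb \<gamma> (bit r i) (bit r ((i+1) mod N)))" by (rule sumD)
  also have "\<dots> \<ge> (\<Sum>i<N. -1 - \<gamma>)" by (intro sum_mono gb_ge assms)
  finally show ?thesis by (simp add: algebra_simps)
qed

lemma sum_W: assumes "N \<ge> 2" "wt N r = 1"
  shows "(\<Sum>i<N. Dr N \<gamma> r i - \<gamma> * Cr N r i) = - (real N * (1 + \<gamma>))"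
proof -
  obtain k where k: "{j. j < N \<and> bit r j} = {k}" using assms(2) unfolding wt_def by (meson card_1_singletonE)
  have nb: "\<not> (bit r i \<and> bit r ((i+1) mod N))" if "i < N" for i
  proof
    assume "bit r i \<and> bit r ((i+1) mod N)"
    then have "i \<in> {k}" "(i+1) mod N \<in> {k}" using that assms(1) k[symmetric] by auto
    then show False using ij_ne[OF assms(1) that] by simp
  qed
  have "(\<Sum>i<N. Dr N \<gamma> r i - \<gamma> * Cr N r i) = (\<Sum>i<N. gb \<gamma> (bit r i) (bit r ((i+1) mod N)))" by (rule sumD)
  also have "\<dots> = (\<Sum>i<N. -1 - \<gamma>)" by (intro sum.cong refl gb_eq nb) simp
  finally show ?thesis by (simp add: algebra_simps)
qed

lemma zero_eig: assumes "N \<ge> 2"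
  shows "H_W N J \<gamma> *\<^sub>v zero_state N = complex_of_real (- (J * real N * (1 + \<gamma>))) \<cdot>\<^sub>v zero_state N"
proof (rule eq_vecI)
  have zc: "zero_state N \<in> carrier_vec (2^N)" by (simp add: zero_state_def)
  show "dim_vec (H_W N J \<gamma> *\<^sub>v zero_state N) = dim_vec (complex_of_real (- (J * real N * (1 + \<gamma>))) \<cdot>\<^sub>v zero_state N)"
    using H_carrier[of N J \<gamma>] by (simp add: zero_state_def)
  fix r assume "r < dim_vec (complex_of_real (- (J * real N * (1 + \<gamma>))) \<cdot>\<^sub>v zero_state N)"
  then have r: "r < 2^N" by (simp add: zero_state_def)
  show "(H_W N J \<gamma> *\<^sub>v zero_state N) $ r = (complex_of_real (- (J * real N * (1 + \<gamma>))) \<cdot>\<^sub>v zero_state N) $ r"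
  proof (cases "r = 0")
    case True
    then show ?thesis using H_vec[OF assms zc r, of J \<gamma>] r
      by (simp add: zero_state_def Dr_def Cr_def zr_def algebra_simps)
  next
    case False
    have "of_real \<gamma> * of_real (Cr N r i) * zero_state N $ sw N r i = 0" if "i < N" for i
      using sw_nz[OF assms that, of r] sw_less[OF assms that r] by (cases "Cr N r i = 0") (auto simp: zero_state_def)
    moreover have "zero_state N $ r = 0" using False r by (simp add: zero_state_def)
    ultimately have "(\<Sum>i<N. of_real (Dr N \<gamma> r i) * zero_state N $ r - of_real \<gamma> * of_real (Cr N r i) * zero_state N $ sw N r i) = 0"
      by (intro sum.neutral ballI) simp
    then show ?thesis using H_vec[OF assms zc r, of J \<gamma>] r \<open>zero_state N $ r = 0\<close> False
      by (simp add: zero_state_def)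
  qed
qed

lemma Wi: "k < 2^N \<Longrightarrow> W_state N $ k = (if wt N k = 1 then complex_of_real (1 / sqrt (real N)) else 0)"
  by (simp add: W_state_def wt_def qbit_bit)

lemma W_carrier: "W_state N \<in> carrier_vec (2^N)"
  by (simp add: W_state_def)

lemma W_eig: assumes "N \<ge> 2"
  shows "H_W N J \<gamma> *\<^sub>v W_state N = complex_of_real (- (J * real N * (1 + \<gamma>))) \<cdot>\<^sub>v W_state N"
proof (rule eq_vecI)
  have zc: "W_state N \<in> carrier_vec (2^N)" by (rule W_carrier)
  show "dim_vec (H_W N J \<gamma> *\<^sub>v W_state N) = dim_vec (complex_of_real (- (J * real N * (1 + \<gamma>))) \<cdot>\<^sub>v W_state N)"
    using H_carrier[of N J \<gamma>] by (simp add: W_state_def)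
  fix r assume "r < dim_vec (complex_of_real (- (J * real N * (1 + \<gamma>))) \<cdot>\<^sub>v W_state N)"
  then have r: "r < 2^N" by (simp add: W_state_def)
  have t: "of_real (Dr N \<gamma> r i) * W_state N $ r - of_real \<gamma> * of_real (Cr N r i) * W_state N $ sw N r i
      = of_real (Dr N \<gamma> r i - \<gamma> * Cr N r i) * W_state N $ r" if i: "i < N" for i
  proof (cases "Cr N r i = 0")
    case True then show ?thesis by simp
  next
    case False
    have "W_state N $ sw N r i = W_state N $ r"
      using Wi[OF sw_less[OF assms i r]] Wi[OF r] wt_sw[OF assms i False] by simp
    then show ?thesis by (simp add: algebra_simps)
  qed
  have "(H_W N J \<gamma> *\<^sub>v W_state N) $ r = of_real J * (\<Sum>i<N. of_real (Dr N \<gamma> r i - \<gamma> * Cr N r i) * W_state N $ r)"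
    using H_vec[OF assms zc r, of J \<gamma>] t by simp
  also have "\<dots> = of_real J * (of_real (\<Sum>i<N. Dr N \<gamma> r i - \<gamma> * Cr N r i) * W_state N $ r)"
    by (simp add: sum_distrib_right)
  also have "\<dots> = complex_of_real (- (J * real N * (1 + \<gamma>))) * W_state N $ r"
  proof (cases "wt N r = 1")
    case True
    show ?thesis unfolding sum_W[OF assms True] by (simp add: algebra_simps)
  next
    case False
    then show ?thesis using Wi[OF r] by simp
  qed
  finally show "(H_W N J \<gamma> *\<^sub>v W_state N) $ r = (complex_of_real (- (J * real N * (1 + \<gamma>))) \<cdot>\<^sub>v W_state N) $ r"
    using r by (simp add: W_state_def)
qed

lemma lower: assumes N: "N \<ge> 2" and J: "J > 0" and g: "\<gamma> > 0" and ev: "eigenvalue (H_W N J \<gamma>) \<mu>"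
  shows "- (J * real N * (1 + \<gamma>)) \<le> Re \<mu>"
proof -
  have dr: "dim_row (H_W N J \<gamma>) = 2^N" using H_carrier[of N J \<gamma>] by simp
  obtain v where vc: "v \<in> carrier_vec (2^N)" and vnz: "v \<noteq> 0\<^sub>v (2^N)" and hv: "H_W N J \<gamma> *\<^sub>v v = \<mu> \<cdot>\<^sub>v v"
    using ev unfolding eigenvalue_def eigenvector_def dr by blast
  define m where "m = Max ((\<lambda>s. cmod (v $ s)) ` {..<2^N})"
  have fin: "finite ((\<lambda>s. cmod (v $ s)) ` {..<(2::nat)^N})" by simp
  have ne: "(\<lambda>s. cmod (v $ s)) ` {..<(2::nat)^N} \<noteq> {}"
    by (metis empty_iff image_is_empty lessThan_iff zero_less_numeral zero_less_power)
  obtain r where r: "r < 2^N" and rm: "cmod (v $ r) = m"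
    using Max_in[OF fin ne] unfolding m_def by auto
  have mx: "cmod (v $ s) \<le> cmod (v $ r)" if "s < 2^N" for s
    using Max_ge[OF fin, of "cmod (v $ s)"] that rm unfolding m_def by auto
  have vr: "v $ r \<noteq> 0"
  proof
    assume "v $ r = 0"
    then have "\<forall>s<2^N. v $ s = 0" using mx by fastforce
    then have "v = 0\<^sub>v (2^N)" using vc by (intro eq_vecI) auto
    with vnz show False by simp
  qed
  have vrp: "cmod (v $ r) > 0" using vr by simp
  define D where "D = (\<Sum>i<N. Dr N \<gamma> r i)"
  define C where "C = (\<Sum>i<N. Cr N r i)"
  define S where "S = (\<Sum>i<N. of_real (Cr N r i) * v $ sw N r i)"
  have "\<mu> * v $ r = (H_W N J \<gamma> *\<^sub>v v) $ r" using hv r vc by simp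
  also have "\<dots> = of_real J * (of_real D * v $ r - of_real \<gamma> * S)"
    unfolding H_vec[OF N vc r] D_def S_def
    by (simp add: sum_subtractf sum_distrib_left sum_distrib_right mult.assoc)
  finally have eq: "(\<mu> - of_real (J * D)) * v $ r = - (of_real (J * \<gamma>) * S)"
    by (simp add: algebra_simps)
  have Sle: "cmod S \<le> C * cmod (v $ r)"
  proof -
    have "cmod S \<le> (\<Sum>i<N. cmod (of_real (Cr N r i) * v $ sw N r i))" unfolding S_def by (rule norm_sum)
    also have "\<dots> \<le> (\<Sum>i<N. Cr N r i * cmod (v $ r))"
    proof (rule sum_mono)
      fix i assume "i \<in> {..<N}"
      then have i: "i < N" by simp
      have c0: "Cr N r i \<ge> 0" by (simp add: Cr_def)
      have "cmod (of_real (Cr N r i) * v $ sw N r i) = Cr N r i * cmod (v $ sw N r i)"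
        using c0 by (simp add: norm_mult)
      also have "\<dots> \<le> Cr N r i * cmod (v $ r)"
        using mx[OF sw_less[OF N i r]] c0 by (simp add: mult_left_mono)
      finally show "cmod (of_real (Cr N r i) * v $ sw N r i) \<le> Cr N r i * cmod (v $ r)" .
    qed
    also have "\<dots> = C * cmod (v $ r)" by (simp add: C_def sum_distrib_right)
    finally show ?thesis .
  qed
  have "cmod (\<mu> - of_real (J * D)) * cmod (v $ r) = (J * \<gamma>) * cmod S"
    using arg_cong[OF eq, of cmod] J g by (simp add: norm_mult)
  also have "\<dots> \<le> (J * \<gamma>) * (C * cmod (v $ r))"
    using Sle J g by (intro mult_left_mono) auto
  finally have "cmod (\<mu> - of_real (J * D)) \<le> J * \<gamma> * C"
    using vrp by (simp add: mult.assoc[symmetric])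
  moreover have "Re \<mu> = J * D + Re (\<mu> - of_real (J * D))" by simp
  moreover have "- cmod (\<mu> - of_real (J * D)) \<le> Re (\<mu> - of_real (J * D))"
    using abs_Re_le_cmod[of "\<mu> - of_real (J * D)"] by linarith
  ultimately have "Re \<mu> \<ge> J * (D - \<gamma> * C)" by (simp add: algebra_simps)
  moreover have "D - \<gamma> * C \<ge> - (real N * (1 + \<gamma>))"
    using sum_lower[OF g N, of r] unfolding D_def C_def by (simp add: sum_subtractf sum_distrib_left)
  ultimately show ?thesis using J
    by (smt (verit, ccfv_SIG) mult_left_mono mult_minus_right mult.assoc mult.commute)
qed

lemma b1: "bit (1::nat) j \<longleftrightarrow> j = 0"
  by (rule bit_1_iff)

lemma W1: assumes "N \<ge> 3" shows "W_state N $ 1 \<noteq> 0"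
proof -
  have l: "1 < (2::nat)^N" using assms by (metis less_le_trans nat_less_le one_less_numeral_iff one_less_power semiring_norm(76) zero_less_numeral numeral_le_one_iff le_less_trans not_le order.refl) 
  have "{j. j < N \<and> bit (1::nat) j} = {0}" using assms by (auto simp only: b1)
  then have "wt N 1 = 1" by (simp add: wt_def)
  then show ?thesis using Wi[OF l] assms by simp
qed

theorem mainTheorem13:
  fixes N :: nat and J \<gamma> :: real
  assumes "N \<ge> 3" and "J > 0" and "\<gamma> > 0"
  shows "\<exists>E :: complex.
           E \<in> \<real>
         \<and> eigenvector (H_W N J \<gamma>) (W_state N) E
         \<and> (\<forall>\<mu>. eigenvalue (H_W N J \<gamma>) \<mu> \<longrightarrow> Re E \<le> Re \<mu>)
         \<and> eigenvector (H_W N J \<gamma>) (zero_state N) E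
         \<and> (\<forall>c :: complex. W_state N \<noteq> c \<cdot>\<^sub>v zero_state N)"
proof (intro exI conjI allI impI)
  let ?E = "complex_of_real (- (J * real N * (1 + \<gamma>)))"
  have N2: "N \<ge> 2" using assms by simp
  have dr: "dim_row (H_W N J \<gamma>) = 2^N" using H_carrier[of N J \<gamma>] by simp
  have l: "1 < (2::nat)^N" using assms by (metis less_le_trans nat_less_le one_less_numeral_iff one_less_power semiring_norm(76) zero_less_numeral numeral_le_one_iff le_less_trans not_le order.refl) 
  show "?E \<in> \<real>" by simp
  show "eigenvector (H_W N J \<gamma>) (W_state N) ?E"
    unfolding eigenvector_def dr
  proof (intro conjI)
    show "W_state N \<in> carrier_vec (2 ^ N)" by (rule W_carrier)
    show "W_state N \<noteq> 0\<^sub>v (2 ^ N)" using W1[OF assms(1)] l by auto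
    show "H_W N J \<gamma> *\<^sub>v W_state N = ?E \<cdot>\<^sub>v W_state N" by (rule W_eig[OF N2])
  qed
  show "eigenvector (H_W N J \<gamma>) (zero_state N) ?E"
    unfolding eigenvector_def dr
  proof (intro conjI)
    show "zero_state N \<in> carrier_vec (2 ^ N)" by (simp add: zero_state_def)
    have "zero_state N $ 0 = 1" by (simp add: zero_state_def)
    then show "zero_state N \<noteq> 0\<^sub>v (2 ^ N)" by auto
    show "H_W N J \<gamma> *\<^sub>v zero_state N = ?E \<cdot>\<^sub>v zero_state N" by (rule zero_eig[OF N2])
  qed
  fix \<mu> assume "eigenvalue (H_W N J \<gamma>) \<mu>"
  then show "Re ?E \<le> Re \<mu>" using lower[OF N2 assms(2,3)] by simp
next
  fix c :: complex
  have l: "1 < (2::nat)^N" using assms by (metis less_le_trans nat_less_le one_less_numeral_iff one_less_power semiring_norm(76) zero_less_numeral numeral_le_one_iff le_less_trans not_le order.refl) 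
  have "(c \<cdot>\<^sub>v zero_state N) $ 1 = 0" using l by (simp add: zero_state_def)
  then show "W_state N \<noteq> c \<cdot>\<^sub>v zero_state N" using W1[OF assms(1)] by metis
qed
end
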